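(* Let $P$ be a distribution on the finite alphabet $\mathcal X$ and let $C_1,C_2,\dots,C_N$ be i.i.d. according to $P$. The probability that $C^N=(C_1,\dots,C_N)$ does not satisfy the prefix condition (with respect to $P$) tends to zero as $N\to\infty$.
   Context: A sequence $c^N\in\mathcal X^N$ satisfies the prefix condition with respect to $P$ if for every prefix length $i$ with $N/\ln N< i\le N$, the empirical distribution $\hat P_{c^i}$ of $c^i=(c_1,\dots,c_i)$ satisfies $\|P-\hat P_{c^i}\|_1\le 1/\ln N$. *)

theory Defs
  imports "HOL-Probability.Probability"
begin

text \<open>A sequence c^N is represented by c :: nat => 'a, with c j (j < N) the (j+1)-th letter.
  The empirical distribution of the prefix c^i = (c 0, ..., c (i-1)).\<close>
definition emp_dist :: "(nat \<Rightarrow> 'a) \<Rightarrow> nat \<Rightarrow> 'a \<Rightarrow> real" where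
  "emp_dist c i x = real (card {j. j < i \<and> c j = x}) / real i"

definition l1_dist :: "'a::finite pmf \<Rightarrow> ('a \<Rightarrow> real) \<Rightarrow> real" where
  "l1_dist P Q = (\<Sum>x\<in>UNIV. \<bar>pmf P x - Q x\<bar>)"

definition prefix_cond :: "'a::finite pmf \<Rightarrow> nat \<Rightarrow> (nat \<Rightarrow> 'a) \<Rightarrow> bool" where
  "prefix_cond P N c \<longleftrightarrow>
     (\<forall>i. real N / ln (real N) < real i \<and> i \<le> N \<longrightarrow> l1_dist P (emp_dist c i) \<le> 1 / ln (real N))"

end

theory Submission imports Defs "HOL-Real_Asymp.Real_Asymp" begin

lemma bern_map: "map_pmf (\<lambda>y. y = x) P = bernoulli_pmf (pmf P x)"
proof (rule pmf_eqI)
  fix b :: bool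
  have p: "0 \<le> pmf P x" "pmf P x \<le> 1" by (auto simp: pmf_le_1)
  show "pmf (map_pmf (\<lambda>y. y = x) P) b = pmf (bernoulli_pmf (pmf P x)) b"
  proof (cases b)
    case True
    then show ?thesis using p by (simp add: pmf_map vimage_def measure_pmf_single)
  next
    case False
    have "measure_pmf.prob P {y. y \<noteq> x} = 1 - measure_pmf.prob P {x}"
      using measure_pmf.prob_compl[of "{x}" P] by (simp add: set_diff_eq)
    then show ?thesis using p False by (simp add: pmf_map vimage_def measure_pmf_single)
  qed
qed

lemma emp_binom:
  assumes "i \<le> N"
  shows "map_pmf (\<lambda>c. card {j. j < i \<and> c j = x}) (Pi_pmf {..<N} d (\<lambda>_. P))
       = binomial_pmf i (pmf P x)"
proof -
  have sub: "Pi_pmf {..<i} d (\<lambda>_. P) = map_pmf (\<lambda>f j. if j \<in> {..<i} then f j else d) (Pi_pmf {..<N} d (\<lambda>_. P))"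
    using assms by (intro Pi_pmf_subset) auto
  have "map_pmf (\<lambda>c. card {j. j < i \<and> c j = x}) (Pi_pmf {..<N} d (\<lambda>_. P))
      = map_pmf (\<lambda>c. card {j. j < i \<and> c j = x}) (Pi_pmf {..<i} d (\<lambda>_. P))"
    unfolding sub map_pmf_comp by (intro map_pmf_cong refl arg_cong[where f=card]) auto
  also have "\<dots> = map_pmf (\<lambda>f. card {j\<in>{..<i}. f j}) (map_pmf (\<lambda>h. (\<lambda>y. y = x) \<circ> h) (Pi_pmf {..<i} d (\<lambda>_. P)))"
    unfolding map_pmf_comp by (simp add: o_def)
  also have "map_pmf (\<lambda>h. (\<lambda>y. y = x) \<circ> h) (Pi_pmf {..<i} d (\<lambda>_. P)) = Pi_pmf {..<i} (d = x) (\<lambda>_. map_pmf (\<lambda>y. y = x) P)"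
    by (rule Pi_pmf_map[symmetric]) auto
  also have "\<dots> = Pi_pmf {..<i} (d = x) (\<lambda>_. bernoulli_pmf (pmf P x))"
    by (simp add: bern_map)
  also have "map_pmf (\<lambda>f. card {j\<in>{..<i}. f j}) \<dots> = binomial_pmf i (pmf P x)"
    by (rule binomial_pmf_altdef'[symmetric]) (auto simp: pmf_le_1)
  finally show ?thesis .
qed

lemma emp_hoeff:
  assumes "0 < i" "i \<le> N" "\<epsilon> \<ge> 0"
  shows "measure_pmf.prob (Pi_pmf {..<N} d (\<lambda>_. P)) {c. \<bar>emp_dist c i x - pmf P x\<bar> \<ge> \<epsilon>}
     \<le> 2 * exp (-2 * real i * \<epsilon>\<^sup>2)"
proof -
  have "measure_pmf.prob (Pi_pmf {..<N} d (\<lambda>_. P)) {c. \<bar>emp_dist c i x - pmf P x\<bar> \<ge> \<epsilon>}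
      = measure_pmf.prob (map_pmf (\<lambda>c. card {j. j < i \<and> c j = x}) (Pi_pmf {..<N} d (\<lambda>_. P)))
          {k. \<bar>real k / real i - pmf P x\<bar> \<ge> \<epsilon>}"
    by (simp add: measure_map_pmf vimage_def emp_dist_def)
  also have "\<dots> = measure_pmf.prob (binomial_pmf i (pmf P x)) {k. \<bar>real k / real i - pmf P x\<bar> \<ge> \<epsilon>}"
    using assms by (simp add: emp_binom)
  also have "\<dots> \<le> 2 * exp (-2 * real i * \<epsilon>\<^sup>2)"
    using binomial_distribution.prob_abs_ge'[of "pmf P x" i \<epsilon>] assms
    by (simp add: binomial_distribution_def pmf_le_1)
  finally show ?thesis .
qed

lemma l1_bad:
  fixes P :: "'a::finite pmf"
  assumes "l1_dist P Q > e"
  shows "\<exists>x. \<bar>Q x - pmf P x\<bar> \<ge> e / real CARD('a)"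
proof (rule ccontr)
  assume "\<not> ?thesis"
  hence h: "\<And>x. \<bar>pmf P x - Q x\<bar> \<le> e / real CARD('a)"
    by (metis abs_minus_commute linorder_not_le less_imp_le)
  have "l1_dist P Q \<le> (\<Sum>x\<in>(UNIV::'a set). e / real CARD('a))"
    unfolding l1_dist_def by (intro sum_mono h)
  also have "\<dots> = e" by simp
  finally show False using assms by simp
qed

lemma bound_lim:
  assumes "K > 0"
  shows "(\<lambda>N::nat. 2 * K * real N * exp (- (2 / K\<^sup>2) * (real N / ln (real N) ^ 3))) \<longlonglongrightarrow> 0"
proof -
  have "2 / K\<^sup>2 > 0" using assms by simp
  then show ?thesis by real_asymp
qed

theorem lemma4:
  fixes P :: "'a::finite pmf"
  shows "(\<lambda>N. measure_pmf.prob (Pi_pmf {..<N} undefined (\<lambda>_. P)) {c. \<not> prefix_cond P N c})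
           \<longlonglongrightarrow> 0"
proof (rule tendsto_sandwich[OF _ _ tendsto_const bound_lim])
  define K where "K = real CARD('a)"
  have K: "K > 0" unfolding K_def by simp
  show "K > 0" by (fact K)
  show "\<forall>\<^sub>F N in sequentially. 0 \<le> measure_pmf.prob (Pi_pmf {..<N} undefined (\<lambda>_. P)) {c. \<not> prefix_cond P N c}"
    by simp
  show "\<forall>\<^sub>F N in sequentially. measure_pmf.prob (Pi_pmf {..<N} undefined (\<lambda>_. P)) {c. \<not> prefix_cond P N c}
      \<le> 2 * K * real N * exp (- (2 / K\<^sup>2) * (real N / ln (real N) ^ 3))"
    using eventually_ge_at_top[of 3]
  proof eventually_elim
    case (elim N)
    define M where "M = Pi_pmf {..<N} undefined (\<lambda>_. P)"
    define L where "L = ln (real N)"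
    have "real N \<ge> 3" using elim by simp
    then have e1: "exp 1 < real N" using e_less_272 by linarith
    have L: "L > 1" unfolding L_def using ln_less_cancel_iff[of "exp 1" "real N"] e1 elim by simp
    define \<epsilon> where "\<epsilon> = 1 / L / K"
    have eps: "\<epsilon> \<ge> 0" using L K unfolding \<epsilon>_def by simp
    define I where "I = {i. i \<le> N \<and> real N / L < real i}"
    have I: "finite I" "I \<subseteq> {1..N}"
    proof -
      show "I \<subseteq> {1..N}"
      proof
        fix i assume "i \<in> I"
        moreover have "real N / L \<ge> 0" using L by simp
        ultimately show "i \<in> {1..N}" unfolding I_def by (auto intro: Nat.gr0I)
      qed
      then show "finite I" by (rule finite_subset) simp
    qed
    have cardI: "real (card I) \<le> real N"
      using card_mono[OF _ I(2)] by simp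
    define A where "A i x = {c. \<bar>emp_dist c i x - pmf P x\<bar> \<ge> \<epsilon>}" for i x
    have sub: "{c. \<not> prefix_cond P N c} \<subseteq> (\<Union>i\<in>I. \<Union>x. A i x)"
    proof
      fix c assume "c \<in> {c. \<not> prefix_cond P N c}"
      then obtain i where i: "real N / L < real i" "i \<le> N" "l1_dist P (emp_dist c i) > 1 / L"
        unfolding prefix_cond_def L_def by auto
      from l1_bad[OF i(3)] obtain x where "\<bar>emp_dist c i x - pmf P x\<bar> \<ge> 1 / L / real CARD('a)" by blast
      then show "c \<in> (\<Union>i\<in>I. \<Union>x. A i x)" using i
        unfolding A_def I_def \<epsilon>_def K_def by auto
    qed
    have "measure_pmf.prob M {c. \<not> prefix_cond P N c} \<le> measure_pmf.prob M (\<Union>i\<in>I. \<Union>x. A i x)"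
      by (intro measure_pmf.finite_measure_mono sub) auto
    also have "\<dots> \<le> (\<Sum>i\<in>I. measure_pmf.prob M (\<Union>x. A i x))"
      by (intro measure_pmf.finite_measure_subadditive_finite I) auto
    also have "\<dots> \<le> (\<Sum>i\<in>I. \<Sum>x\<in>UNIV. measure_pmf.prob M (A i x))"
      by (intro sum_mono measure_pmf.finite_measure_subadditive_finite) auto
    also have "\<dots> \<le> (\<Sum>i\<in>I. \<Sum>x\<in>(UNIV::'a set). 2 * exp (- (2 / K\<^sup>2) * (real N / L ^ 3)))"
    proof (intro sum_mono)
      fix i x assume i: "i \<in> I"
      then have i1: "0 < i" "i \<le> N" "real N / L < real i" using I(2) unfolding I_def by auto
      have "measure_pmf.prob M (A i x) \<le> 2 * exp (-2 * real i * \<epsilon>\<^sup>2)"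
        unfolding M_def A_def by (rule emp_hoeff[OF i1(1,2) eps])
      also have "-2 * real i * \<epsilon>\<^sup>2 \<le> - (2 / K\<^sup>2) * (real N / L ^ 3)"
      proof -
        have h1: "\<epsilon>\<^sup>2 = 1 / (L\<^sup>2 * K\<^sup>2)" unfolding \<epsilon>_def by (simp add: power_divide power_mult_distrib)
        have "real N / L ^ 3 / K\<^sup>2 = real N / L * (1 / (L\<^sup>2 * K\<^sup>2))"
          using L K by (simp add: field_simps power3_eq_cube power2_eq_square)
        also have "\<dots> \<le> real i * (1 / (L\<^sup>2 * K\<^sup>2))"
          using i1(3) L K by (intro mult_right_mono) auto
        also have "\<dots> = real i * \<epsilon>\<^sup>2" by (simp only: h1)
        finally have "real N / L ^ 3 / K\<^sup>2 \<le> real i * \<epsilon>\<^sup>2" .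
        moreover have "- (2 / K\<^sup>2) * (real N / L ^ 3) = -2 * (real N / L ^ 3 / K\<^sup>2)" by simp
        ultimately show ?thesis by linarith
      qed
      then have "2 * exp (-2 * real i * \<epsilon>\<^sup>2) \<le> 2 * exp (- (2 / K\<^sup>2) * (real N / L ^ 3))"
        by simp
      finally show "measure_pmf.prob M (A i x) \<le> 2 * exp (- (2 / K\<^sup>2) * (real N / L ^ 3))" .
    qed
    also have "\<dots> = real (card I) * (K * (2 * exp (- (2 / K\<^sup>2) * (real N / L ^ 3))))"
      by (simp add: K_def)
    also have "\<dots> \<le> real N * (K * (2 * exp (- (2 / K\<^sup>2) * (real N / L ^ 3))))"
      using K by (intro mult_right_mono cardI) auto
    finally show ?case unfolding M_def L_def by (simp add: mult_ac)
  qed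
qed

end
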